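(* Let $G$ be a torsion abelian group and $\varphi\colon G\to G$ an endomorphism. Then $\varphi$ is positively expansive if and only if it is a factor of a unilateral Bernoulli shift $\sigma\colon S^{(\mathbb N)}\to S^{(\mathbb N)}$ for some finite abelian group $S$. Analogously, an automorphism $\varphi\colon G\to G$ is expansive if and only if it is a factor of a bilateral Bernoulli shift $\sigma\colon S^{(\mathbb Z)}\to S^{(\mathbb Z)}$ for some finite abelian group $S$.
   Context: $\mathbb N=\{0,1,2,\dots\}$. An endomorphism $\varphi$ of an abelian group $G$ is positively expansive if there is a finite subgroup $S\leq G$ such that for every finite subgroup $F\leq G$ there is $n\in\mathbb N$ with $F\subseteq\sum_{k=0}^n\varphi^kS$; an automorphism is expansive if the same holds with $\sum_{|k|\leq n}\varphi^kS$ in place of $\sum_{k=0}^n\varphi^kS$. For $I\in\{\mathbb N,\mathbb Z\}$ and a finite abelian group $S$, $S^{(I)}=\bigoplus_{k\in I}S$ (finitely supported sequences), and the shift $\sigma\colon S^{(I)}\to S^{(I)}$ is $\sigma((s_k))=(s_{k-1})$, with the convention $s_{-1}=0$ when $I=\mathbb N$. An endomorphism $\psi\colon H\to H$ is a factor of $\varphi\colon G\to G$ if there is a surjective homomorphism $\pi\colon G\to H$ with $\pi\circ\varphi=\psi\circ\pi$. *)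

theory Defs
  imports "HOL-Algebra.Algebra"
begin

text \<open>Abelian groups are HOL-Algebra structures (written multiplicatively).\<close>

definition torsion_group :: "('a, 'm) monoid_scheme \<Rightarrow> bool" where
  "torsion_group G \<longleftrightarrow> (\<forall>x \<in> carrier G. \<exists>n::nat. n > 0 \<and> x [^]\<^bsub>G\<^esub> n = \<one>\<^bsub>G\<^esub>)"

definition set_sum_list :: "('a, 'm) monoid_scheme \<Rightarrow> ('i \<Rightarrow> 'a set) \<Rightarrow> 'i list \<Rightarrow> 'a set" where
  "set_sum_list G A ks = foldr (\<lambda>k acc. A k <#>\<^bsub>G\<^esub> acc) ks {\<one>\<^bsub>G\<^esub>}"

definition auto_pow :: "('a, 'm) monoid_scheme \<Rightarrow> ('a \<Rightarrow> 'a) \<Rightarrow> int \<Rightarrow> 'a \<Rightarrow> 'a" where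
  "auto_pow G \<phi> k = (if k \<ge> 0 then \<phi> ^^ nat k else (inv_into (carrier G) \<phi>) ^^ nat (- k))"

definition positively_expansive :: "('a, 'm) monoid_scheme \<Rightarrow> ('a \<Rightarrow> 'a) \<Rightarrow> bool" where
  "positively_expansive G \<phi> \<longleftrightarrow>
     (\<exists>S. subgroup S G \<and> finite S \<and>
        (\<forall>F. subgroup F G \<and> finite F \<longrightarrow>
           (\<exists>n::nat. F \<subseteq> set_sum_list G (\<lambda>k. (\<phi> ^^ k) ` S) [0..<Suc n])))"

definition expansive :: "('a, 'm) monoid_scheme \<Rightarrow> ('a \<Rightarrow> 'a) \<Rightarrow> bool" where
  "expansive G \<phi> \<longleftrightarrow>
     (\<exists>S. subgroup S G \<and> finite S \<and>
        (\<forall>F. subgroup F G \<and> finite F \<longrightarrow>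
           (\<exists>n::nat. F \<subseteq> set_sum_list G (\<lambda>k. auto_pow G \<phi> k ` S) [- int n..int n])))"

text \<open>Finitely supported sequences S^(N) and S^(Z), and the shifts.\<close>
abbreviation fs_seq :: "('b, 'c) monoid_scheme \<Rightarrow> ('i \<Rightarrow> 'b) monoid" where
  "fs_seq S \<equiv> sum_group UNIV (\<lambda>_. S)"

definition shift_nat :: "('b, 'c) monoid_scheme \<Rightarrow> (nat \<Rightarrow> 'b) \<Rightarrow> nat \<Rightarrow> 'b" where
  "shift_nat S x = (\<lambda>k. if k = 0 then \<one>\<^bsub>S\<^esub> else x (k - 1))"

definition shift_int :: "(int \<Rightarrow> 'b) \<Rightarrow> int \<Rightarrow> 'b" where
  "shift_int x = (\<lambda>k. x (k - 1))"

definition is_factor :: "('h, 'n) monoid_scheme \<Rightarrow> ('h \<Rightarrow> 'h) \<Rightarrow> ('a, 'm) monoid_scheme \<Rightarrow> ('a \<Rightarrow> 'a) \<Rightarrow> bool" where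
  "is_factor H \<psi> G \<phi> \<longleftrightarrow>
     (\<exists>\<pi>. \<pi> \<in> hom H G \<and> \<pi> ` carrier H = carrier G \<and> (\<forall>x \<in> carrier H. \<pi> (\<psi> x) = \<phi> (\<pi> x)))"

end

theory Submission
  imports Defs
begin


lemma transport_group:
  assumes G: "comm_group G" and H: "subgroup H G" and fin: "finite H"
  shows "\<exists>(S::nat monoid) e. comm_group S \<and> finite (carrier S) \<and> e \<in> hom S G \<and> e ` carrier S = H"
proof -
  interpret G: comm_group G by (rule G)
  obtain e where e: "bij_betw e {0..<card H} H" using ex_bij_betw_nat_finite[OF fin] by blast
  define d where "d = inv_into {0..<card H} e"
  define S where "S = \<lparr>carrier = {0..<card H}, monoid.mult = \<lambda>a b. d (e a \<otimes>\<^bsub>G\<^esub> e b), one = d \<one>\<^bsub>G\<^esub>\<rparr>"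
  have eH: "a \<in> carrier S \<Longrightarrow> e a \<in> H" for a using e unfolding S_def bij_betw_def by auto
  have dS: "y \<in> H \<Longrightarrow> d y \<in> carrier S" for y unfolding S_def d_def
    by (metis bij_betw_def e inv_into_into monoid.select_convs(1) partial_object.select_convs(1))
  have ed: "y \<in> H \<Longrightarrow> e (d y) = y" for y unfolding d_def
    by (meson bij_betw_inv_into_right e)
  have de: "a \<in> carrier S \<Longrightarrow> d (e a) = a" for a unfolding d_def S_def
    by (metis bij_betw_inv_into_left e partial_object.select_convs(1))
  have Hc: "y \<in> H \<Longrightarrow> y \<in> carrier G" for y using subgroup.subset[OF H] by blast
  have Hm: "x \<in> H \<Longrightarrow> y \<in> H \<Longrightarrow> x \<otimes>\<^bsub>G\<^esub> y \<in> H" for x y by (rule subgroup.m_closed[OF H])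
  have Hi: "x \<in> H \<Longrightarrow> inv\<^bsub>G\<^esub> x \<in> H" for x by (rule subgroup.m_inv_closed[OF H])
  have H1: "\<one>\<^bsub>G\<^esub> \<in> H" by (rule subgroup.one_closed[OF H])
  have mS: "x \<otimes>\<^bsub>S\<^esub> y = d (e x \<otimes>\<^bsub>G\<^esub> e y)" for x y unfolding S_def by simp
  have oS: "\<one>\<^bsub>S\<^esub> = d \<one>\<^bsub>G\<^esub>" unfolding S_def by simp
  have "comm_group S"
  proof (rule comm_groupI)
    fix x y z assume x: "x \<in> carrier S" and y: "y \<in> carrier S" and z: "z \<in> carrier S"
    show "x \<otimes>\<^bsub>S\<^esub> y \<in> carrier S" unfolding mS using x y eH Hm dS by blast
    have "e x \<otimes>\<^bsub>G\<^esub> e y \<in> H" "e y \<otimes>\<^bsub>G\<^esub> e z \<in> H" using x y z eH Hm by auto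
    then show "x \<otimes>\<^bsub>S\<^esub> y \<otimes>\<^bsub>S\<^esub> z = x \<otimes>\<^bsub>S\<^esub> (y \<otimes>\<^bsub>S\<^esub> z)"
      using x y z eH Hc unfolding mS by (simp add: ed G.m_assoc)
    show "x \<otimes>\<^bsub>S\<^esub> y = y \<otimes>\<^bsub>S\<^esub> x" unfolding mS using x y eH Hc G.m_comm by metis
  next
    show "\<one>\<^bsub>S\<^esub> \<in> carrier S" unfolding oS using dS H1 by blast
  next
    fix x assume x: "x \<in> carrier S"
    show "\<one>\<^bsub>S\<^esub> \<otimes>\<^bsub>S\<^esub> x = x" unfolding oS mS using x eH Hc H1 ed de by simp
    show "\<exists>y\<in>carrier S. y \<otimes>\<^bsub>S\<^esub> x = \<one>\<^bsub>S\<^esub>"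
    proof (intro bexI)
      have ex: "e x \<in> H" using x eH by auto
      show "d (inv\<^bsub>G\<^esub> e x) \<otimes>\<^bsub>S\<^esub> x = \<one>\<^bsub>S\<^esub>" unfolding mS oS using ex Hi Hc ed by simp
      show "d (inv\<^bsub>G\<^esub> e x) \<in> carrier S" using ex Hi dS by simp
    qed
  qed
  moreover have "finite (carrier S)" unfolding S_def by simp
  moreover have "e \<in> hom S G"
    unfolding hom_def using eH Hc by (auto simp: mS ed Hm)
  moreover have "e ` carrier S = H" using e unfolding S_def bij_betw_def by simp
  ultimately show ?thesis by blast
qed



lemma (in comm_group) set_sum_list_eq:
  assumes "distinct ks" "\<And>k. k \<in> set ks \<Longrightarrow> subgroup (A k) G"
  shows "set_sum_list G A ks = {finprod G f (set ks) | f. \<forall>k\<in>set ks. f k \<in> A k}"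
  using assms
proof (induction ks)
  case Nil
  show ?case by (simp add: set_sum_list_def)
next
  case (Cons k ks)
  have IH: "set_sum_list G A ks = {finprod G f (set ks) | f. \<forall>k\<in>set ks. f k \<in> A k}"
    using Cons by auto
  have sk: "set_sum_list G A (k#ks) = A k <#> set_sum_list G A ks" by (simp add: set_sum_list_def)
  have sub: "\<And>j. j \<in> set (k#ks) \<Longrightarrow> A j \<subseteq> carrier G"
    using Cons.prems(2) subgroup.subset by blast
  have kn: "k \<notin> set ks" using Cons.prems(1) by simp
  show ?case
  proof (intro Set.set_eqI iffI)
    fix x assume "x \<in> set_sum_list G A (k#ks)"
    then obtain a f where a: "a \<in> A k" and f: "\<forall>j\<in>set ks. f j \<in> A j"
      and x: "x = a \<otimes> finprod G f (set ks)"
      unfolding sk IH set_mult_def by auto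
    define g where "g = f(k := a)"
    have gc: "g \<in> set ks \<rightarrow> carrier G" using f sub kn unfolding g_def by auto
    have gk: "g k \<in> carrier G" using a sub by (auto simp: g_def)
    have "finprod G g (set (k#ks)) = g k \<otimes> finprod G g (set ks)"
      using finprod_insert[OF _ kn gc gk] by simp
    also have "finprod G g (set ks) = finprod G f (set ks)"
      using gc kn by (intro finprod_cong') (auto simp: g_def)
    finally have "x = finprod G g (set (k#ks))" using x by (simp add: g_def fun_upd_def)
    moreover have "\<forall>j\<in>set (k#ks). g j \<in> A j" using f a kn by (auto simp: g_def)
    ultimately show "x \<in> {finprod G f (set (k#ks)) | f. \<forall>k\<in>set (k#ks). f k \<in> A k}" by blast
  next
    fix x assume "x \<in> {finprod G f (set (k#ks)) | f. \<forall>k\<in>set (k#ks). f k \<in> A k}"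
    then obtain f where f: "\<forall>j\<in>set (k#ks). f j \<in> A j" and x: "x = finprod G f (set (k#ks))"
      by blast
    have fc: "f \<in> set ks \<rightarrow> carrier G" using f sub by auto
    have fk: "f k \<in> carrier G" using f sub by auto
    have "x = f k \<otimes> finprod G f (set ks)" using x finprod_insert[OF _ kn fc fk] by simp
    moreover have "finprod G f (set ks) \<in> set_sum_list G A ks" unfolding IH using f by auto
    ultimately show "x \<in> set_sum_list G A (k#ks)" unfolding sk set_mult_def using f by auto
  qed
qed

lemma (in comm_group) set_sum_list_mono:
  assumes "distinct ks" "distinct ks'" "set ks \<subseteq> set ks'"
    "\<And>k. k \<in> set ks' \<Longrightarrow> subgroup (A k) G"
  shows "set_sum_list G A ks \<subseteq> set_sum_list G A ks'"
proof
  fix x assume "x \<in> set_sum_list G A ks"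
  then obtain f where f: "\<forall>k\<in>set ks. f k \<in> A k" and x: "x = finprod G f (set ks)"
    using set_sum_list_eq[of ks A] assms by auto
  define g where "g k = (if k \<in> set ks then f k else \<one>)" for k
  have sub: "\<And>j. j \<in> set ks' \<Longrightarrow> A j \<subseteq> carrier G"
    using assms(4) subgroup.subset by blast
  have "x = finprod G g (set ks')"
    unfolding x using assms(3) f sub
    by (intro finprod_mono_neutral_cong_left) (auto simp: g_def, blast)
  moreover have "\<forall>k\<in>set ks'. g k \<in> A k" using f assms(4) by (auto simp: g_def subgroup.one_closed)
  ultimately show "x \<in> set_sum_list G A ks'"
    using set_sum_list_eq[of ks' A] assms by auto
qed

lemma finite_cover_mono:
  assumes "\<And>x. x \<in> XX \<Longrightarrow> \<exists>n::nat. x \<in> TT n" "\<And>n m. n \<le> m \<Longrightarrow> TT n \<subseteq> TT m"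
    "finite FF" "FF \<subseteq> XX"
  shows "\<exists>n. FF \<subseteq> TT n"
  using assms(3,4)
proof (induction FF rule: finite_induct)
  case empty then show ?case by auto
next
  case (insert x FF)
  then obtain n where n: "FF \<subseteq> TT n" by auto
  obtain m where m: "x \<in> TT m" using insert.prems assms(1) by (metis insert_subset)
  have "FF \<subseteq> TT (max n m)" "x \<in> TT (max n m)" using n m assms(2)[of n "max n m"] assms(2)[of m "max n m"] by auto
  then show ?case by blast
qed

lemma (in group) torsion_finite_generate:
  assumes "x \<in> carrier G" "n > 0" "x [^] (n::nat) = \<one>"
  shows "finite (generate G {x})"
proof -
  have "ord x \<noteq> 0" using assms ord_eq_0 by auto
  then show ?thesis using generate_pow_card[OF assms(1)] card.infinite by force
qed

lemma hom_funpow: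
  assumes "h \<in> hom G G" shows "h ^^ n \<in> hom G G"
proof (induction n)
  case 0 then show ?case by (simp add: hom_def)
next
  case (Suc n)
  have "h \<circ> h ^^ n \<in> hom G G" by (rule hom_compose[OF Suc assms])
  then show ?case by (simp only: funpow.simps)
qed

context comm_monoid begin

lemma gfinprod_reindex:
  assumes "inj_on b A" "g \<in> b ` A \<rightarrow> carrier G"
  shows "gfinprod G g (b ` A) = gfinprod G (g \<circ> b) A"
proof -
  have eq: "{x \<in> b ` A. g x \<noteq> \<one>} = b ` {x \<in> A. g (b x) \<noteq> \<one>}" by auto
  have eq2: "{x \<in> A. (g \<circ> b) x \<noteq> \<one>} = {x \<in> A. g (b x) \<noteq> \<one>}" by auto
  have inj: "inj_on b {x \<in> A. g (b x) \<noteq> \<one>}" by (rule inj_on_subset[OF assms(1)]) auto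
  have fin: "finite {x \<in> b ` A. g x \<noteq> \<one>} \<longleftrightarrow> finite {x \<in> A. g (b x) \<noteq> \<one>}"
    unfolding eq using finite_image_iff[OF inj] by simp
  have "finprod G g (b ` {x \<in> A. g (b x) \<noteq> \<one>}) = finprod G (\<lambda>x. g (b x)) {x \<in> A. g (b x) \<noteq> \<one>}"
    by (rule finprod_reindex) (use assms(2) inj in auto)
  then show ?thesis
    unfolding gfinprod_def eq eq2 using fin eq by (simp add: comp_def)
qed

end



lemma hom_one_gen: "group G \<Longrightarrow> group H \<Longrightarrow> h \<in> hom G H \<Longrightarrow> h \<one>\<^bsub>G\<^esub> = \<one>\<^bsub>H\<^esub>"
  by (simp add: group_hom.hom_one group_hom_axioms_def group_hom_def)

lemma group_hom_gen: "group G \<Longrightarrow> group H \<Longrightarrow> h \<in> hom G H \<Longrightarrow> group_hom G H h"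
  by (simp add: group_hom_axioms_def group_hom_def)

lemma (in comm_group) hom_finprod_gen:
  assumes h: "h \<in> hom G G" and "finite B" and "g \<in> B \<rightarrow> carrier G"
  shows "h (finprod G g B) = finprod G (h \<circ> g) B"
  using assms(2,3)
proof (induction B rule: finite_induct)
  case empty then show ?case using hom_one_gen[OF is_group is_group h] by simp
next
  case (insert x F)
  have hg: "h \<circ> g \<in> F \<rightarrow> carrier G" "(h \<circ> g) x \<in> carrier G" using insert.prems h
    by (auto simp: hom_def)
  have "h (finprod G g (insert x F)) = h (g x \<otimes> finprod G g F)"
    using insert by simp
  also have "\<dots> = h (g x) \<otimes> h (finprod G g F)" using insert.prems h by (simp add: hom_mult)
  also have "\<dots> = finprod G (h \<circ> g) (insert x F)" using insert hg by (simp add: comp_def)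
  finally show ?case .
qed

lemma (in comm_group) gfinprod_hom:
  assumes h: "h \<in> hom G G" and g: "g \<in> A \<rightarrow> carrier G" and fin: "finite {x\<in>A. g x \<noteq> \<one>}"
  shows "h (gfinprod G g A) = gfinprod G (h \<circ> g) A"
proof -
  let ?B = "{x\<in>A. g x \<noteq> \<one>}"
  have h1: "h \<one> = \<one>" using hom_one_gen[OF is_group is_group h] by simp
  have hgc: "h \<circ> g \<in> A \<rightarrow> carrier G" using g h by (auto simp: hom_def)
  have e1: "gfinprod G g A = finprod G g ?B" by (simp add: gfinprod_def fin)
  have "gfinprod G (h \<circ> g) A = gfinprod G (h \<circ> g) ?B"
    by (rule gfinprod_mono_neutral_cong_right) (use hgc h1 in auto)
  also have "\<dots> = finprod G (h \<circ> g) ?B" using fin hgc by (intro gfinprod_eq_finprod) auto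
  finally show ?thesis unfolding e1 using hom_finprod_gen[OF h fin] g by auto
qed

definition delta :: "('b,'c) monoid_scheme \<Rightarrow> 'i \<Rightarrow> 'b \<Rightarrow> 'i \<Rightarrow> 'b" where
  "delta S k s = (\<lambda>i. if i = k then s else \<one>\<^bsub>S\<^esub>)"

lemma carrier_fs_seq:
  assumes "group S"
  shows "carrier (fs_seq S :: ('i \<Rightarrow> 'b) monoid) = {x. (\<forall>i. x i \<in> carrier S) \<and> finite {i. x i \<noteq> \<one>\<^bsub>S\<^esub>}}"
  using carrier_sum_group[of UNIV "\<lambda>_. S"] assms by (auto simp: PiE_UNIV_domain)

lemma mult_fs_seq: "x \<otimes>\<^bsub>fs_seq S\<^esub> y = (\<lambda>i. x i \<otimes>\<^bsub>S\<^esub> y i)"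
  by (simp add: restrict_def)

lemma one_fs_seq: "\<one>\<^bsub>fs_seq S\<^esub> = (\<lambda>i. \<one>\<^bsub>S\<^esub>)"
  by (simp add: restrict_def)

lemma delta_carrier:
  assumes "group S" "s \<in> carrier S"
  shows "delta S k s \<in> carrier (fs_seq S)"
proof -
  have "{i. delta S k s i \<noteq> \<one>\<^bsub>S\<^esub>} \<subseteq> {k}" by (auto simp: delta_def)
  moreover have "\<one>\<^bsub>S\<^esub> \<in> carrier S" using assms(1) by (simp add: group.is_monoid monoid.one_closed)
  ultimately show ?thesis using assms by (auto simp: carrier_fs_seq delta_def intro: finite_subset)
qed

lemma delta_hom:
  assumes "group S"
  shows "delta S k \<in> hom S (fs_seq S)"
  unfolding hom_def using delta_carrier[OF assms]
  by (auto simp: delta_def fun_eq_iff group.is_monoid[OF assms] monoid.r_one[OF group.is_monoid[OF assms]])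



lemma fwd_generic:
  fixes S :: "('b,'c) monoid_scheme" and \<pi> :: "('i \<Rightarrow> 'b) \<Rightarrow> 'a" and P :: "'i \<Rightarrow> 'a \<Rightarrow> 'a"
    and Ls :: "nat \<Rightarrow> 'i list"
  assumes G: "comm_group G" and S: "comm_group S" and finS: "finite (carrier S)"
    and pi: "\<pi> \<in> hom (fs_seq S) G" and surj: "\<pi> ` carrier (fs_seq S) = carrier G"
    and P: "\<And>k. P k \<in> hom G G"
    and dl: "\<And>k s. s \<in> carrier S \<Longrightarrow> \<pi> (delta S k s) = P k (\<pi> (delta S i0 s))"
    and Ld: "\<And>n. distinct (Ls n)" and Lm: "\<And>n m. n \<le> m \<Longrightarrow> set (Ls n) \<subseteq> set (Ls m)"
    and Lc: "\<And>K. finite K \<Longrightarrow> \<exists>n. K \<subseteq> set (Ls n)"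
  shows "\<exists>S0. subgroup S0 G \<and> finite S0 \<and> (\<forall>F. subgroup F G \<and> finite F \<longrightarrow>
            (\<exists>n. F \<subseteq> set_sum_list G (\<lambda>k. P k ` S0) (Ls n)))"
proof -
  interpret G: comm_group G by (rule G)
  interpret S: comm_group S by (rule S)
  have grpseq: "group (fs_seq S :: ('i \<Rightarrow> 'b) monoid)" by (rule sum_group) (simp add: S.is_group)
  have cs: "carrier (fs_seq S :: ('i \<Rightarrow> 'b) monoid) = {x. (\<forall>i. x i \<in> carrier S) \<and> finite {i. x i \<noteq> \<one>\<^bsub>S\<^esub>}}"
    by (rule carrier_fs_seq) (rule S.is_group)
  define D where "D = \<pi> \<circ> delta S i0"
  have Dh: "D \<in> hom S G" unfolding D_def by (rule hom_compose[OF delta_hom[OF S.is_group] pi])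
  define S0 where "S0 = D ` carrier S"
  have S0sub: "subgroup S0 G" unfolding S0_def
    using group_hom.img_is_subgroup[OF group_hom_gen[OF S.is_group G.is_group Dh]] .
  have S0fin: "finite S0" unfolding S0_def using finS by simp
  have Psub: "subgroup (P k ` S0) G" for k
    using group_hom.subgroup_img_is_subgroup[OF group_hom_gen[OF G.is_group G.is_group P] S0sub] .
  have pi1: "\<pi> (\<lambda>i. \<one>\<^bsub>S\<^esub>) = \<one>\<^bsub>G\<^esub>"
    using hom_one_gen[OF grpseq G.is_group pi] by (simp add: restrict_def)
  have key: "\<pi> y = finprod G (\<lambda>k. \<pi> (delta S k (y k))) K"
    if "finite K" "y \<in> carrier (fs_seq S)" "{i. y i \<noteq> \<one>\<^bsub>S\<^esub>} \<subseteq> K" for K y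
    using that
  proof (induction K arbitrary: y rule: finite_induct)
    case empty
    then have "y = (\<lambda>i. \<one>\<^bsub>S\<^esub>)" by auto
    then show ?case using pi1 by simp
  next
    case (insert k K)
    define y' where "y' = y(k := \<one>\<^bsub>S\<^esub>)"
    have yc: "\<And>i. y i \<in> carrier S" using insert.prems cs by auto
    have y'c: "y' \<in> carrier (fs_seq S)" unfolding cs y'_def
      using insert.prems yc by (auto simp: cs intro: finite_subset)
    have y'K: "{i. y' i \<noteq> \<one>\<^bsub>S\<^esub>} \<subseteq> K" using insert.prems by (auto simp: y'_def)
    have dc: "delta S k (y k) \<in> carrier (fs_seq S)" by (rule delta_carrier[OF S.is_group yc])
    have pic: "\<And>j i. \<pi> (delta S j (y i)) \<in> carrier G"
      using hom_in_carrier[OF pi delta_carrier[OF S.is_group yc]] by blast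
    have ydec: "y = delta S k (y k) \<otimes>\<^bsub>fs_seq S\<^esub> y'"
      unfolding mult_fs_seq using yc by (auto simp: fun_eq_iff delta_def y'_def)
    have "\<pi> y = \<pi> (delta S k (y k)) \<otimes>\<^bsub>G\<^esub> \<pi> y'"
      using ydec dc y'c pi by (metis hom_mult)
    also have "\<pi> y' = finprod G (\<lambda>k. \<pi> (delta S k (y k))) K"
    proof -
      have "\<pi> y' = finprod G (\<lambda>j. \<pi> (delta S j (y' j))) K" using insert.IH y'c y'K by blast
      also have "\<dots> = finprod G (\<lambda>j. \<pi> (delta S j (y j))) K"
        using insert.hyps pic
        by (intro G.finprod_cong') (auto simp: y'_def)
      finally show ?thesis .
    qed
    also have "\<pi> (delta S k (y k)) \<otimes>\<^bsub>G\<^esub> finprod G (\<lambda>k. \<pi> (delta S k (y k))) K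
        = finprod G (\<lambda>k. \<pi> (delta S k (y k))) (insert k K)"
      using insert.hyps pic
      by (subst G.finprod_insert) auto
    finally show ?case .
  qed
  define T where "T n = set_sum_list G (\<lambda>k. P k ` S0) (Ls n)" for n
  have cover: "\<exists>n. x \<in> T n" if x: "x \<in> carrier G" for x
  proof -
    obtain y where y: "y \<in> carrier (fs_seq S)" "x = \<pi> y" using x surj by auto
    have fin: "finite {i. y i \<noteq> \<one>\<^bsub>S\<^esub>}" and yc: "\<And>i. y i \<in> carrier S" using y cs by auto
    obtain n where n: "{i. y i \<noteq> \<one>\<^bsub>S\<^esub>} \<subseteq> set (Ls n)" using Lc[OF fin] by auto
    have xeq: "x = finprod G (\<lambda>k. \<pi> (delta S k (y k))) (set (Ls n))"
      using key[OF _ y(1) n] y(2) by simp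
    have mem: "\<forall>k\<in>set (Ls n). \<pi> (delta S k (y k)) \<in> P k ` S0"
    proof
      fix k
      have "\<pi> (delta S k (y k)) = P k (D (y k))" unfolding D_def comp_def by (rule dl[OF yc])
      moreover have "D (y k) \<in> S0" unfolding S0_def using yc by blast
      ultimately show "\<pi> (delta S k (y k)) \<in> P k ` S0" by blast
    qed
    have "x \<in> set_sum_list G (\<lambda>k. P k ` S0) (Ls n)"
    proof -
      have eq: "set_sum_list G (\<lambda>k. P k ` S0) (Ls n) = {finprod G f (set (Ls n)) | f. \<forall>k\<in>set (Ls n). f k \<in> P k ` S0}"
        by (rule G.set_sum_list_eq[OF Ld]) (rule Psub)
      show ?thesis unfolding eq using xeq mem by blast
    qed
    then show ?thesis unfolding T_def by blast
  qed
  have mono: "T n \<subseteq> T m" if "n \<le> m" for n m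
    unfolding T_def by (rule G.set_sum_list_mono[OF Ld Ld Lm[OF that] Psub])
  have "\<forall>F. subgroup F G \<and> finite F \<longrightarrow> (\<exists>n. F \<subseteq> T n)"
  proof (intro allI impI)
    fix F assume F: "subgroup F G \<and> finite F"
    then have "F \<subseteq> carrier G" using subgroup.subset by blast
    then show "\<exists>n. F \<subseteq> T n" using finite_cover_mono[of "carrier G" T F] cover mono F by blast
  qed
  then show ?thesis using S0sub S0fin unfolding T_def by blast
qed



lemma bwd_generic:
  fixes S0 :: "'a set" and P :: "'i \<Rightarrow> 'a \<Rightarrow> 'a" and Ls :: "nat \<Rightarrow> 'i list"
  assumes G: "comm_group G" and sub: "subgroup S0 G" and fin: "finite S0" and P: "\<And>k. P k \<in> hom G G"
    and Ld: "\<And>n. distinct (Ls n)"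
    and cov: "\<And>x. x \<in> carrier G \<Longrightarrow> \<exists>n. x \<in> set_sum_list G (\<lambda>k. P k ` S0) (Ls n)"
  shows "\<exists>(S::nat monoid) e. comm_group S \<and> finite (carrier S) \<and> e \<in> hom S G \<and>
      (\<lambda>y. gfinprod G (\<lambda>k. P k (e (y k))) UNIV) \<in> hom (fs_seq S :: ('i \<Rightarrow> nat) monoid) G \<and>
      (\<lambda>y. gfinprod G (\<lambda>k. P k (e (y k))) UNIV) ` carrier (fs_seq S :: ('i \<Rightarrow> nat) monoid) = carrier G"
proof -
  interpret G: comm_group G by (rule G)
  obtain S :: "nat monoid" and e where S: "comm_group S" and finS: "finite (carrier S)"
    and e: "e \<in> hom S G" and eS: "e ` carrier S = S0"
    using transport_group[OF G sub fin] by blast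
  interpret S: comm_group S by (rule S)
  have cs: "carrier (fs_seq S :: ('i \<Rightarrow> nat) monoid) = {x. (\<forall>i. x i \<in> carrier S) \<and> finite {i. x i \<noteq> \<one>\<^bsub>S\<^esub>}}"
    by (rule carrier_fs_seq) (rule S.is_group)
  define \<pi> where "\<pi> = (\<lambda>y::'i \<Rightarrow> nat. gfinprod G (\<lambda>k. P k (e (y k))) UNIV)"
  have Pe: "(\<lambda>s. P k (e s)) \<in> hom S G" for k using hom_compose[OF e P[of k]] by (simp add: comp_def)
  have pih: "\<pi> \<in> hom (fs_seq S) G" unfolding \<pi>_def
    by (rule G.hom_group_sum[of UNIV "\<lambda>k s. P k (e s)" "\<lambda>_. S", simplified]) (use Pe S.is_group in auto)
  have Pe1: "P k (e \<one>\<^bsub>S\<^esub>) = \<one>\<^bsub>G\<^esub>" for k using hom_one_gen[OF S.is_group G.is_group Pe] by simp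
  have Psub: "subgroup (P k ` S0) G" for k
    using group_hom.subgroup_img_is_subgroup[OF group_hom_gen[OF G.is_group G.is_group P] sub] .
  have "carrier G \<subseteq> \<pi> ` carrier (fs_seq S)"
  proof
    fix x assume x: "x \<in> carrier G"
    obtain n where n: "x \<in> set_sum_list G (\<lambda>k. P k ` S0) (Ls n)" using cov[OF x] by blast
    have eq: "set_sum_list G (\<lambda>k. P k ` S0) (Ls n) = {finprod G f (set (Ls n)) | f. \<forall>k\<in>set (Ls n). f k \<in> P k ` S0}"
      by (rule G.set_sum_list_eq[OF Ld]) (rule Psub)
    obtain f where f: "\<forall>k\<in>set (Ls n). f k \<in> P k ` S0" and xf: "x = finprod G f (set (Ls n))"
      using n unfolding eq by blast
    have "\<forall>k\<in>set (Ls n). \<exists>s. s \<in> carrier S \<and> f k = P k (e s)" using f eS by blast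
    then obtain sf where sf: "\<And>k. k \<in> set (Ls n) \<Longrightarrow> sf k \<in> carrier S \<and> f k = P k (e (sf k))"
      by metis
    define y where "y k = (if k \<in> set (Ls n) then sf k else \<one>\<^bsub>S\<^esub>)" for k
    have yc: "y \<in> carrier (fs_seq S)" unfolding cs
    proof (intro CollectI conjI allI)
      show "y i \<in> carrier S" for i using sf by (auto simp: y_def)
      show "finite {i. y i \<noteq> \<one>\<^bsub>S\<^esub>}"
        by (rule finite_subset[of _ "set (Ls n)"]) (auto simp: y_def)
    qed
    have fc: "\<And>k. P k (e (y k)) \<in> carrier G"
      using yc cs hom_in_carrier[OF Pe] by auto
    have fc': "\<And>k. k \<in> set (Ls n) \<Longrightarrow> P k (e (sf k)) \<in> carrier G"
      using sf hom_in_carrier[OF Pe] by blast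
    have "\<pi> y = gfinprod G (\<lambda>k. P k (e (y k))) (set (Ls n))"
      unfolding \<pi>_def
      by (rule G.gfinprod_mono_neutral_cong_right) (auto simp: y_def Pe1 fc fc')
    also have "\<dots> = finprod G (\<lambda>k. P k (e (y k))) (set (Ls n))"
      by (rule G.gfinprod_eq_finprod) (auto simp: fc)
    also have "\<dots> = finprod G f (set (Ls n))"
      by (rule G.finprod_cong') (use sf fc' in \<open>auto simp: y_def Pi_def\<close>)
    finally show "x \<in> \<pi> ` carrier (fs_seq S)" using xf yc by (metis image_eqI)
  qed
  moreover have "\<pi> ` carrier (fs_seq S) \<subseteq> carrier G" using pih by (auto simp: hom_def)
  ultimately show ?thesis using S finS e pih unfolding \<pi>_def by blast
qed



lemma shift_nat_delta: "shift_nat S (delta S k s) = delta S (Suc k) s"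
  by (auto simp: shift_nat_def delta_def fun_eq_iff)

lemma funpow_one:
  assumes "group G" "h \<in> hom G G" shows "(h ^^ k) \<one>\<^bsub>G\<^esub> = \<one>\<^bsub>G\<^esub>"
  using hom_one_gen[OF assms(1) assms(1) hom_funpow[OF assms(2)]] .

lemma factor_nat_PE:
  fixes S :: "('b,'c) monoid_scheme"
  assumes G: "comm_group G" and phi: "\<phi> \<in> hom G G" and S: "comm_group S" and finS: "finite (carrier S)"
    and fac: "is_factor (fs_seq S) (shift_nat S) G \<phi>"
  shows "positively_expansive G \<phi>"
proof -
  interpret G: comm_group G by (rule G)
  interpret S: comm_group S by (rule S)
  obtain \<pi> where pi: "\<pi> \<in> hom (fs_seq S) G" and surj: "\<pi> ` carrier (fs_seq S) = carrier G"
    and comm: "\<And>x. x \<in> carrier (fs_seq S) \<Longrightarrow> \<pi> (shift_nat S x) = \<phi> (\<pi> x)"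
    using fac unfolding is_factor_def by blast
  have dl: "\<pi> (delta S k s) = (\<phi> ^^ k) (\<pi> (delta S 0 s))" if s: "s \<in> carrier S" for k s
  proof (induction k)
    case 0 then show ?case by simp
  next
    case (Suc k)
    have "\<pi> (delta S (Suc k) s) = \<pi> (shift_nat S (delta S k s))" by (simp add: shift_nat_delta)
    also have "\<dots> = \<phi> (\<pi> (delta S k s))" by (rule comm[OF delta_carrier[OF S.is_group s]])
    finally show ?case using Suc by simp
  qed
  have Lc: "\<exists>n. K \<subseteq> set [0..<Suc n]" if "finite K" for K :: "nat set"
  proof -
    have "K \<subseteq> set [0..<Suc (Max K)]"
    proof
      fix x assume "x \<in> K"
      then have "x \<le> Max K" using that by simp
      then show "x \<in> set [0..<Suc (Max K)]" by (simp del: upt_Suc)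
    qed
    then show ?thesis by blast
  qed
  have "\<exists>S0. subgroup S0 G \<and> finite S0 \<and> (\<forall>F. subgroup F G \<and> finite F \<longrightarrow>
            (\<exists>n. F \<subseteq> set_sum_list G (\<lambda>k. (\<phi> ^^ k) ` S0) ((\<lambda>n. [0..<Suc n]) n)))"
    apply (rule fwd_generic[OF G S finS pi surj, where P = "\<lambda>k. \<phi> ^^ k" and Ls = "\<lambda>n. [0..<Suc n]"])
        apply (rule hom_funpow[OF phi])
       apply (erule dl)
      apply (simp del: upt_Suc)
     apply (simp del: upt_Suc)
    apply (erule Lc)
    done
  then show ?thesis unfolding positively_expansive_def by simp
qed

lemma cover_from_torsion:
  assumes G: "comm_group G" and tor: "torsion_group G"
    and T: "\<And>F. subgroup F G \<and> finite F \<Longrightarrow> \<exists>n::nat. F \<subseteq> T n"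
    and x: "x \<in> carrier G"
  shows "\<exists>n. x \<in> T n"
proof -
  interpret G: comm_group G by (rule G)
  obtain m :: nat where m: "m > 0" "x [^]\<^bsub>G\<^esub> m = \<one>\<^bsub>G\<^esub>" using tor x unfolding torsion_group_def by blast
  have "subgroup (generate G {x}) G" using x by (intro G.generate_is_subgroup) auto
  moreover have "finite (generate G {x})" by (rule G.torsion_finite_generate[OF x m])
  ultimately obtain n where "generate G {x} \<subseteq> T n" using T by blast
  moreover have "x \<in> generate G {x}" by (intro generate.incl) simp
  ultimately show ?thesis by blast
qed

lemma PE_factor_nat:
  assumes G: "comm_group G" and tor: "torsion_group G" and phi: "\<phi> \<in> hom G G"
    and pe: "positively_expansive G \<phi>"
  shows "\<exists>S :: nat monoid. comm_group S \<and> finite (carrier S) \<and> is_factor (fs_seq S) (shift_nat S) G \<phi>"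
proof -
  interpret G: comm_group G by (rule G)
  obtain S0 where sub: "subgroup S0 G" and fin: "finite S0"
    and T: "\<And>F. subgroup F G \<and> finite F \<Longrightarrow> \<exists>n::nat. F \<subseteq> set_sum_list G (\<lambda>k. (\<phi> ^^ k) ` S0) [0..<Suc n]"
    using pe unfolding positively_expansive_def by blast
  have cov: "\<exists>n. x \<in> set_sum_list G (\<lambda>k. (\<phi> ^^ k) ` S0) [0..<Suc n]" if "x \<in> carrier G" for x
    by (rule cover_from_torsion[OF G tor _ that, of "\<lambda>n. set_sum_list G (\<lambda>k. (\<phi> ^^ k) ` S0) [0..<Suc n]"])
       (rule T)
  obtain S :: "nat monoid" and e where S: "comm_group S" and finS: "finite (carrier S)"
    and e: "e \<in> hom S G"
    and pih: "(\<lambda>y. gfinprod G (\<lambda>k. (\<phi> ^^ k) (e (y k))) UNIV) \<in> hom (fs_seq S :: (nat \<Rightarrow> nat) monoid) G"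
    and surj: "(\<lambda>y. gfinprod G (\<lambda>k. (\<phi> ^^ k) (e (y k))) UNIV) ` carrier (fs_seq S :: (nat \<Rightarrow> nat) monoid) = carrier G"
  proof -
    have "\<exists>(S::nat monoid) e. comm_group S \<and> finite (carrier S) \<and> e \<in> hom S G \<and>
      (\<lambda>y. gfinprod G (\<lambda>k. (\<phi> ^^ k) (e (y k))) UNIV) \<in> hom (fs_seq S :: (nat \<Rightarrow> nat) monoid) G \<and>
      (\<lambda>y. gfinprod G (\<lambda>k. (\<phi> ^^ k) (e (y k))) UNIV) ` carrier (fs_seq S :: (nat \<Rightarrow> nat) monoid) = carrier G"
      apply (rule bwd_generic[OF G sub fin, where Ls = "\<lambda>n. [0..<Suc n]" and P = "\<lambda>k. \<phi> ^^ k"])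
        apply (rule hom_funpow[OF phi])
       apply (simp del: upt_Suc)
      apply (erule cov)
      done
    then show ?thesis using that by blast
  qed
  interpret S: comm_group S by (rule S)
  define \<pi> where "\<pi> = (\<lambda>y::nat \<Rightarrow> nat. gfinprod G (\<lambda>k. (\<phi> ^^ k) (e (y k))) UNIV)"
  have cs: "carrier (fs_seq S :: (nat \<Rightarrow> nat) monoid) = {x. (\<forall>i. x i \<in> carrier S) \<and> finite {i. x i \<noteq> \<one>\<^bsub>S\<^esub>}}"
    by (rule carrier_fs_seq) (rule S.is_group)
  have e1: "e \<one>\<^bsub>S\<^esub> = \<one>\<^bsub>G\<^esub>" by (rule hom_one_gen[OF S.is_group G.is_group e])
  have p1: "\<And>k. (\<phi> ^^ k) \<one>\<^bsub>G\<^esub> = \<one>\<^bsub>G\<^esub>" by (rule funpow_one[OF G.is_group phi])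
  have pc: "\<And>k z. z \<in> carrier G \<Longrightarrow> (\<phi> ^^ k) z \<in> carrier G" by (rule hom_in_carrier[OF hom_funpow[OF phi]])
  have comm: "\<pi> (shift_nat S y) = \<phi> (\<pi> y)" if y: "y \<in> carrier (fs_seq S)" for y
  proof -
    have yc: "\<And>i. y i \<in> carrier S" and yfin: "finite {i. y i \<noteq> \<one>\<^bsub>S\<^esub>}" using y cs by auto
    define g where "g k = (\<phi> ^^ k) (e (y k))" for k
    define h where "h k = (\<phi> ^^ k) (e (shift_nat S y k))" for k
    have gc: "g \<in> UNIV \<rightarrow> carrier G" using yc e pc by (auto simp: g_def hom_in_carrier)
    have gfin: "finite {x \<in> UNIV. g x \<noteq> \<one>\<^bsub>G\<^esub>}"
      by (rule finite_subset[OF _ yfin]) (auto simp: g_def e1 p1)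
    have hc: "h \<in> UNIV \<rightarrow> carrier G"
      using yc e pc by (auto simp: h_def shift_nat_def hom_in_carrier e1)
    have r0: "\<And>i::nat. i \<notin> range Suc \<Longrightarrow> i = 0" by (metis not0_implies_Suc rangeI)
    have "\<pi> (shift_nat S y) = gfinprod G h UNIV" unfolding \<pi>_def h_def ..
    also have "\<dots> = gfinprod G h (range Suc)"
      by (rule G.gfinprod_mono_neutral_cong_right)
         (use hc r0 in \<open>auto simp: h_def shift_nat_def e1 p1\<close>)
    also have "\<dots> = gfinprod G (h \<circ> Suc) UNIV"
      by (rule G.gfinprod_reindex) (use hc in auto)
    also have "\<dots> = gfinprod G (\<phi> \<circ> g) UNIV"
      by (rule G.gfinprod_cong) (use gc phi in \<open>auto simp: h_def g_def shift_nat_def hom_in_carrier Pi_def\<close>)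
    also have "\<dots> = \<phi> (gfinprod G g UNIV)"
      by (rule G.gfinprod_hom[OF phi gc gfin, symmetric])
    also have "gfinprod G g UNIV = \<pi> y" unfolding \<pi>_def g_def ..
    finally show ?thesis .
  qed
  have "is_factor (fs_seq S) (shift_nat S) G \<phi>"
    unfolding is_factor_def using pih surj comm unfolding \<pi>_def by blast
  then show ?thesis using S finS by blast
qed



lemma iso_bij_carrier: "\<phi> \<in> iso G G \<Longrightarrow> bij_betw \<phi> (carrier G) (carrier G)"
  by (simp add: iso_def)

lemma inv_pow_carrier:
  assumes "\<phi> \<in> iso G G" "x \<in> carrier G"
  shows "(inv_into (carrier G) \<phi> ^^ m) x \<in> carrier G"
proof (induction m)
  case 0 then show ?case using assms by simp
next
  case (Suc m)
  have "\<phi> ` carrier G = carrier G" using iso_bij_carrier[OF assms(1)] by (simp add: bij_betw_def)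
  then show ?case using Suc by (simp add: inv_into_into)
qed

lemma auto_pow_hom:
  assumes "group G" "\<phi> \<in> iso G G"
  shows "auto_pow G \<phi> k \<in> hom G G"
proof -
  have h: "\<phi> \<in> hom G G" using assms(2) by (simp add: iso_def)
  have "inv_into (carrier G) \<phi> \<in> iso G G" by (rule group.iso_set_sym[OF assms])
  then have hi: "inv_into (carrier G) \<phi> \<in> hom G G" by (simp add: iso_def)
  show ?thesis unfolding auto_pow_def using hom_funpow[OF h] hom_funpow[OF hi] by simp
qed

lemma auto_pow_0: "auto_pow G \<phi> 0 x = x"
  by (simp add: auto_pow_def)

lemma auto_pow_succ:
  assumes iso: "\<phi> \<in> iso G G" and x: "x \<in> carrier G"
  shows "auto_pow G \<phi> (k + 1) x = \<phi> (auto_pow G \<phi> k x)"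
proof (cases "k \<ge> 0")
  case True
  then have "nat (k + 1) = Suc (nat k)" by simp
  then show ?thesis using True by (simp add: auto_pow_def)
next
  case False
  define \<psi> where "\<psi> = inv_into (carrier G) \<phi>"
  define m where "m = nat (-(k+1))"
  have nk: "nat (- k) = Suc m" using False by (simp add: m_def)
  have a1: "auto_pow G \<phi> (k + 1) x = (\<psi> ^^ m) x"
  proof (cases "k + 1 \<ge> 0")
    case True
    then have "k = -1" using False by simp
    then show ?thesis by (simp add: auto_pow_def m_def)
  next
    case False
    then show ?thesis by (simp add: auto_pow_def m_def \<psi>_def)
  qed
  have a2: "auto_pow G \<phi> k x = \<psi> ((\<psi> ^^ m) x)" using False nk by (simp add: auto_pow_def \<psi>_def)
  have zc: "(\<psi> ^^ m) x \<in> carrier G" unfolding \<psi>_def by (rule inv_pow_carrier[OF iso x])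
  have "\<phi> ` carrier G = carrier G" using iso_bij_carrier[OF iso] by (simp add: bij_betw_def)
  then have "\<phi> (\<psi> ((\<psi> ^^ m) x)) = (\<psi> ^^ m) x" using zc unfolding \<psi>_def by (simp add: f_inv_into_f)
  then show ?thesis using a1 a2 by simp
qed

lemma shift_int_delta: "shift_int (delta S k s) = delta S (k + 1) s"
  by (auto simp: shift_int_def delta_def fun_eq_iff)

lemma factor_int_E:
  fixes S :: "('b,'c) monoid_scheme"
  assumes G: "comm_group G" and phi: "\<phi> \<in> iso G G" and S: "comm_group S" and finS: "finite (carrier S)"
    and fac: "is_factor (fs_seq S) shift_int G \<phi>"
  shows "expansive G \<phi>"
proof -
  interpret G: comm_group G by (rule G)
  interpret S: comm_group S by (rule S)
  have bij: "bij_betw \<phi> (carrier G) (carrier G)" by (rule iso_bij_carrier[OF phi])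
  obtain \<pi> where pi: "\<pi> \<in> hom (fs_seq S) G" and surj: "\<pi> ` carrier (fs_seq S) = carrier G"
    and comm: "\<And>x. x \<in> carrier (fs_seq S) \<Longrightarrow> \<pi> (shift_int x) = \<phi> (\<pi> x)"
    using fac unfolding is_factor_def by blast
  have dl: "\<pi> (delta S k s) = auto_pow G \<phi> k (\<pi> (delta S 0 s))" if s: "s \<in> carrier S" for k s
  proof -
    let ?z = "\<pi> (delta S 0 s)"
    have dc: "\<And>j. \<pi> (delta S j s) \<in> carrier G"
      using hom_in_carrier[OF pi delta_carrier[OF S.is_group s]] by blast
    have zc: "?z \<in> carrier G" by (rule dc)
    have ac: "\<And>j. auto_pow G \<phi> j ?z \<in> carrier G"
      using hom_in_carrier[OF auto_pow_hom[OF G.is_group phi] zc] by blast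
    have sh: "\<And>j. \<pi> (delta S (j + 1) s) = \<phi> (\<pi> (delta S j s))"
      using comm[OF delta_carrier[OF S.is_group s]] by (simp add: shift_int_delta)
    show ?thesis
    proof (induction k rule: int_induct[where k = 0])
      case base then show ?case by (simp add: auto_pow_0)
    next
      case (step1 i)
      then show ?case using sh[of i] auto_pow_succ[OF phi zc, of i] by simp
    next
      case (step2 i)
      have "\<phi> (\<pi> (delta S (i - 1) s)) = \<pi> (delta S i s)" using sh[of "i - 1"] by simp
      also have "\<dots> = auto_pow G \<phi> i ?z" by (rule step2.IH)
      also have "\<dots> = \<phi> (auto_pow G \<phi> (i - 1) ?z)" using auto_pow_succ[OF phi zc, of "i - 1"] by simp
      finally show ?case using bij dc ac unfolding bij_betw_def inj_on_def by blast
    qed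
  qed
  have Lc: "\<exists>n. K \<subseteq> set [- int n..int n]" if fin: "finite K" for K :: "int set"
  proof -
    have "K \<subseteq> set [- int (nat (Max (abs ` K)))..int (nat (Max (abs ` K)))]"
    proof
      fix x assume xK: "x \<in> K"
      then have "\<bar>x\<bar> \<le> Max (abs ` K)" using fin by simp
      then show "x \<in> set [- int (nat (Max (abs ` K)))..int (nat (Max (abs ` K)))]" by (auto simp: abs_le_iff)
    qed
    then show ?thesis by blast
  qed
  have "\<exists>S0. subgroup S0 G \<and> finite S0 \<and> (\<forall>F. subgroup F G \<and> finite F \<longrightarrow>
            (\<exists>n. F \<subseteq> set_sum_list G (\<lambda>k. auto_pow G \<phi> k ` S0) [- int n..int n]))"
    apply (rule fwd_generic[OF G S finS pi surj, where P = "\<lambda>k. auto_pow G \<phi> k" and Ls = "\<lambda>n. [- int n..int n]"])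
        apply (rule auto_pow_hom[OF G.is_group phi])
       apply (erule dl)
      apply simp
     apply simp
    apply (erule Lc)
    done
  then show ?thesis unfolding expansive_def by simp
qed

lemma E_factor_int:
  assumes G: "comm_group G" and tor: "torsion_group G" and phi: "\<phi> \<in> iso G G"
    and ex: "expansive G \<phi>"
  shows "\<exists>S :: nat monoid. comm_group S \<and> finite (carrier S) \<and> is_factor (fs_seq S) shift_int G \<phi>"
proof -
  interpret G: comm_group G by (rule G)
  have phih: "\<phi> \<in> hom G G" using phi by (simp add: iso_def)
  obtain S0 where sub: "subgroup S0 G" and fin: "finite S0"
    and T: "\<And>F. subgroup F G \<and> finite F \<Longrightarrow> \<exists>n::nat. F \<subseteq> set_sum_list G (\<lambda>k. auto_pow G \<phi> k ` S0) [- int n..int n]"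
    using ex unfolding expansive_def by blast
  have cov: "\<exists>n. x \<in> set_sum_list G (\<lambda>k. auto_pow G \<phi> k ` S0) [- int n..int n]" if "x \<in> carrier G" for x
    by (rule cover_from_torsion[OF G tor _ that, of "\<lambda>n. set_sum_list G (\<lambda>k. auto_pow G \<phi> k ` S0) [- int n..int n]"])
       (rule T)
  obtain S :: "nat monoid" and e where S: "comm_group S" and finS: "finite (carrier S)"
    and e: "e \<in> hom S G"
    and pih: "(\<lambda>y. gfinprod G (\<lambda>k. auto_pow G \<phi> k (e (y k))) UNIV) \<in> hom (fs_seq S :: (int \<Rightarrow> nat) monoid) G"
    and surj: "(\<lambda>y. gfinprod G (\<lambda>k. auto_pow G \<phi> k (e (y k))) UNIV) ` carrier (fs_seq S :: (int \<Rightarrow> nat) monoid) = carrier G"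
  proof -
    have "\<exists>(S::nat monoid) e. comm_group S \<and> finite (carrier S) \<and> e \<in> hom S G \<and>
      (\<lambda>y. gfinprod G (\<lambda>k. auto_pow G \<phi> k (e (y k))) UNIV) \<in> hom (fs_seq S :: (int \<Rightarrow> nat) monoid) G \<and>
      (\<lambda>y. gfinprod G (\<lambda>k. auto_pow G \<phi> k (e (y k))) UNIV) ` carrier (fs_seq S :: (int \<Rightarrow> nat) monoid) = carrier G"
      apply (rule bwd_generic[OF G sub fin, where Ls = "\<lambda>n. [- int n..int n]" and P = "\<lambda>k. auto_pow G \<phi> k"])
        apply (rule auto_pow_hom[OF G.is_group phi])
       apply simp
      apply (erule cov)
      done
    then show ?thesis using that by blast
  qed
  interpret S: comm_group S by (rule S)
  define \<pi> where "\<pi> = (\<lambda>y::int \<Rightarrow> nat. gfinprod G (\<lambda>k. auto_pow G \<phi> k (e (y k))) UNIV)"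
  have cs: "carrier (fs_seq S :: (int \<Rightarrow> nat) monoid) = {x. (\<forall>i. x i \<in> carrier S) \<and> finite {i. x i \<noteq> \<one>\<^bsub>S\<^esub>}}"
    by (rule carrier_fs_seq) (rule S.is_group)
  have e1: "e \<one>\<^bsub>S\<^esub> = \<one>\<^bsub>G\<^esub>" by (rule hom_one_gen[OF S.is_group G.is_group e])
  have p1: "\<And>k. auto_pow G \<phi> k \<one>\<^bsub>G\<^esub> = \<one>\<^bsub>G\<^esub>"
    by (rule hom_one_gen[OF G.is_group G.is_group auto_pow_hom[OF G.is_group phi]])
  have pc: "\<And>k z. z \<in> carrier G \<Longrightarrow> auto_pow G \<phi> k z \<in> carrier G"
    by (rule hom_in_carrier[OF auto_pow_hom[OF G.is_group phi]])
  have comm: "\<pi> (shift_int y) = \<phi> (\<pi> y)" if y: "y \<in> carrier (fs_seq S)" for y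
  proof -
    have yc: "\<And>i. y i \<in> carrier S" and yfin: "finite {i. y i \<noteq> \<one>\<^bsub>S\<^esub>}" using y cs by auto
    have eyc: "\<And>i. e (y i) \<in> carrier G" using yc e by (simp add: hom_in_carrier)
    define g where "g k = auto_pow G \<phi> k (e (y k))" for k
    define h where "h k = auto_pow G \<phi> k (e (shift_int y k))" for k
    have gc: "g \<in> UNIV \<rightarrow> carrier G" using eyc pc by (auto simp: g_def)
    have gfin: "finite {x \<in> UNIV. g x \<noteq> \<one>\<^bsub>G\<^esub>}"
      by (rule finite_subset[OF _ yfin]) (auto simp: g_def e1 p1)
    have hc: "h \<in> UNIV \<rightarrow> carrier G"
      using eyc pc by (auto simp: h_def shift_int_def)
    have r: "range (\<lambda>j::int. j + 1) = UNIV" by (rule surjI[of _ "\<lambda>j. j - 1"]) simp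
    have "\<pi> (shift_int y) = gfinprod G h UNIV" unfolding \<pi>_def h_def ..
    also have "\<dots> = gfinprod G h (range (\<lambda>j::int. j + 1))" by (simp only: r)
    also have "\<dots> = gfinprod G (h \<circ> (\<lambda>j::int. j + 1)) UNIV"
      by (rule G.gfinprod_reindex) (use hc in auto)
    also have "\<dots> = gfinprod G (\<phi> \<circ> g) UNIV"
      by (rule G.gfinprod_cong) (use gc hc eyc pc hom_in_carrier[OF phih] in \<open>auto simp: h_def g_def shift_int_def Pi_def auto_pow_succ[OF phi]\<close>)
    also have "\<dots> = \<phi> (gfinprod G g UNIV)"
      by (rule G.gfinprod_hom[OF phih gc gfin, symmetric])
    also have "gfinprod G g UNIV = \<pi> y" unfolding \<pi>_def g_def ..
    finally show ?thesis .
  qed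
  have "is_factor (fs_seq S) shift_int G \<phi>"
    unfolding is_factor_def using pih surj comm unfolding \<pi>_def by blast
  then show ?thesis using S finS by blast
qed


theorem proposition2p6:
  fixes G :: "('a, 'm) monoid_scheme" and \<phi> :: "'a \<Rightarrow> 'a"
  assumes "comm_group G" and "torsion_group G"
  shows "(\<phi> \<in> hom G G \<longrightarrow>
            ((positively_expansive G \<phi> \<longleftrightarrow>
               (\<exists>S :: nat monoid. comm_group S \<and> finite (carrier S) \<and>
                  is_factor (fs_seq S) (shift_nat S) G \<phi>))
             \<and> (\<forall>S :: ('b, 'c) monoid_scheme. comm_group S \<and> finite (carrier S) \<and>
                  is_factor (fs_seq S) (shift_nat S) G \<phi> \<longrightarrow> positively_expansive G \<phi>)))
       \<and> (\<phi> \<in> iso G G \<longrightarrow>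
            ((expansive G \<phi> \<longleftrightarrow>
               (\<exists>S :: nat monoid. comm_group S \<and> finite (carrier S) \<and>
                  is_factor (fs_seq S) shift_int G \<phi>))
             \<and> (\<forall>S :: ('b, 'c) monoid_scheme. comm_group S \<and> finite (carrier S) \<and>
                  is_factor (fs_seq S) shift_int G \<phi> \<longrightarrow> expansive G \<phi>)))"
proof -
  have A: "\<phi> \<in> hom G G \<longrightarrow>
            ((positively_expansive G \<phi> \<longleftrightarrow>
               (\<exists>S :: nat monoid. comm_group S \<and> finite (carrier S) \<and>
                  is_factor (fs_seq S) (shift_nat S) G \<phi>))
             \<and> (\<forall>S :: ('b, 'c) monoid_scheme. comm_group S \<and> finite (carrier S) \<and>
                  is_factor (fs_seq S) (shift_nat S) G \<phi> \<longrightarrow> positively_expansive G \<phi>))"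
  proof
    assume phi: "\<phi> \<in> hom G G"
    show "(positively_expansive G \<phi> \<longleftrightarrow>
               (\<exists>S :: nat monoid. comm_group S \<and> finite (carrier S) \<and>
                  is_factor (fs_seq S) (shift_nat S) G \<phi>))
             \<and> (\<forall>S :: ('b, 'c) monoid_scheme. comm_group S \<and> finite (carrier S) \<and>
                  is_factor (fs_seq S) (shift_nat S) G \<phi> \<longrightarrow> positively_expansive G \<phi>)"
    proof (intro conjI iffI allI impI)
      assume "positively_expansive G \<phi>"
      then show "\<exists>S :: nat monoid. comm_group S \<and> finite (carrier S) \<and>
                  is_factor (fs_seq S) (shift_nat S) G \<phi>" by (rule PE_factor_nat[OF assms(1,2) phi])
    next
      assume "\<exists>S :: nat monoid. comm_group S \<and> finite (carrier S) \<and>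
                  is_factor (fs_seq S) (shift_nat S) G \<phi>"
      then show "positively_expansive G \<phi>" using factor_nat_PE[OF assms(1) phi] by blast
    next
      fix S :: "('b, 'c) monoid_scheme"
      assume "comm_group S \<and> finite (carrier S) \<and> is_factor (fs_seq S) (shift_nat S) G \<phi>"
      then show "positively_expansive G \<phi>" using factor_nat_PE[OF assms(1) phi] by blast
    qed
  qed
  have B: "\<phi> \<in> iso G G \<longrightarrow>
            ((expansive G \<phi> \<longleftrightarrow>
               (\<exists>S :: nat monoid. comm_group S \<and> finite (carrier S) \<and>
                  is_factor (fs_seq S) shift_int G \<phi>))
             \<and> (\<forall>S :: ('b, 'c) monoid_scheme. comm_group S \<and> finite (carrier S) \<and>
                  is_factor (fs_seq S) shift_int G \<phi> \<longrightarrow> expansive G \<phi>))"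
  proof
    assume phi: "\<phi> \<in> iso G G"
    show "(expansive G \<phi> \<longleftrightarrow>
               (\<exists>S :: nat monoid. comm_group S \<and> finite (carrier S) \<and>
                  is_factor (fs_seq S) shift_int G \<phi>))
             \<and> (\<forall>S :: ('b, 'c) monoid_scheme. comm_group S \<and> finite (carrier S) \<and>
                  is_factor (fs_seq S) shift_int G \<phi> \<longrightarrow> expansive G \<phi>)"
    proof (intro conjI iffI allI impI)
      assume "expansive G \<phi>"
      then show "\<exists>S :: nat monoid. comm_group S \<and> finite (carrier S) \<and>
                  is_factor (fs_seq S) shift_int G \<phi>" by (rule E_factor_int[OF assms(1,2) phi])
    next
      assume "\<exists>S :: nat monoid. comm_group S \<and> finite (carrier S) \<and>
                  is_factor (fs_seq S) shift_int G \<phi>"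
      then show "expansive G \<phi>" using factor_int_E[OF assms(1) phi] by blast
    next
      fix S :: "('b, 'c) monoid_scheme"
      assume "comm_group S \<and> finite (carrier S) \<and> is_factor (fs_seq S) shift_int G \<phi>"
      then show "expansive G \<phi>" using factor_int_E[OF assms(1) phi] by blast
    qed
  qed
  show ?thesis using A B by blast
qed

end
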